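(* The function $n \mapsto \mathrm{vol}(L(n))$, for integers $n \geq 5$, is increasing. Here $$\mathrm{vol}(L(n)) = \frac{n}{2}\Big(2\Lambda(\theta_n) + \Lambda(\theta_n + \tfrac{\pi}{n}) + \Lambda(\theta_n - \tfrac{\pi}{n}) - \Lambda(2\theta_n - \tfrac{\pi}{2})\Big),$$ with $$\theta_n = \frac{\pi}{2} - \arccos\Big(\frac{1}{2\cos(\pi/n)}\Big), \qquad \Lambda(z) = -\int_0^z \log|2\sin t|\,dt.$$
   Context: $L(n)$, $n\ge5$, is the $n$-th L\"obell polyhedron, realized as a compact right-angled hyperbolic polyhedron in $\mathbb{H}^3$. Combinatorially it consists of two pentagonal flowers (an $n$-gon surrounded cyclically by $n$ pentagons) glued along their boundaries so that the 1-skeleton is trivalent. The volume formula displayed is Vesnin's known formula for its hyperbolic volume. *)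

theory Defs
  imports "HOL-Analysis.Analysis"
begin

text \<open>Lobachevsky function: Lambda z = - integral from 0 to z of log |2 sin t| dt
  (oriented Lebesgue interval integral; the integrand is Lebesgue integrable near 0).\<close>
definition lobachevsky :: "real \<Rightarrow> real" where
  "lobachevsky z = - (LBINT t=0..z. ln \<bar>2 * sin t\<bar>)"

definition lobell_theta :: "nat \<Rightarrow> real" where
  "lobell_theta n = pi / 2 - arccos (1 / (2 * cos (pi / real n)))"

definition lobell_vol :: "nat \<Rightarrow> real" where
  "lobell_vol n = (let th = lobell_theta n in
     real n / 2 * (2 * lobachevsky th + lobachevsky (th + pi / real n)
       + lobachevsky (th - pi / real n) - lobachevsky (2 * th - pi / 2)))"

end

theory Submission
  imports Defs
begin


definition lf :: "real \<Rightarrow> real" where "lf t = ln \<bar>2 * sin t\<bar>"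

lemma sin_lower:
  assumes "0 \<le> (t::real)" "t \<le> 1" shows "t/2 \<le> sin t"
proof (cases "t = 0")
  case True then show ?thesis by simp
next
  case False
  then have "0 < t" using assms by simp
  from MVT2[OF this, of sin cos] obtain z where z: "0 < z" "z < t" "sin t - sin 0 = (t - 0) * cos z"
    by (auto intro: DERIV_sin)
  have "pi/3 > 1" using pi_gt3 by simp
  have "cos (pi/3) \<le> cos z"
    using z assms \<open>pi/3 > 1\<close> by (intro cos_monotone_0_pi_le) auto
  then have "1/2 \<le> cos z" by (simp add: cos_60)
  then show ?thesis using z \<open>0 < t\<close> by (simp add: mult_left_mono[of "1/2" "cos z" t] )
qed

lemma lf_upper: "lf t \<le> ln 2"
proof (cases "sin t = 0")
  case True then show ?thesis by (simp add: lf_def)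
next
  case False
  then have "0 < \<bar>2 * sin t\<bar>" by simp
  moreover have "\<bar>2 * sin t\<bar> \<le> 2" by (simp add: abs_mult)
  ultimately show ?thesis unfolding lf_def by (subst ln_le_cancel_iff) auto
qed

lemma lf_bound:
  assumes "0 < t" "t \<le> pi/2"
  shows "\<bar>lf t\<bar> \<le> 1 + 2 * t powr (-1/2)"
proof -
  have up: "lf t \<le> 1" using lf_upper[of t] ln_2_less_1 by simp
  have "0 < sin t" using assms by (intro sin_gt_zero) auto
  have lo: "- (2 * t powr (-1/2)) \<le> lf t"
  proof (cases "t \<le> 1")
    case True
    have "t \<le> 2 * sin t" using sin_lower[of t] True assms by simp
    then have "ln t \<le> lf t" unfolding lf_def using assms \<open>0 < sin t\<close> by simp
    moreover have "ln (t powr (-1/2)) \<le> t powr (-1/2) - 1"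
      using assms by (intro ln_le_minus_one) auto
    then have "- ln t / 2 \<le> t powr (-1/2)" using assms by (simp add: ln_powr)
    ultimately show ?thesis by simp
  next
    case False
    have "sin 1 \<le> sin t" using False assms by (intro sin_monotone_2pi_le) auto
    moreover have "1/2 \<le> sin (1::real)" using sin_lower[of "1::real"] by simp
    ultimately have "1 \<le> 2 * sin t" by simp
    then have "0 \<le> lf t" unfolding lf_def by simp
    moreover have "0 \<le> t powr (-1/2)" by simp
    ultimately show ?thesis by linarith
  qed
  show ?thesis using up lo by (simp add: abs_le_iff) (smt (verit) powr_ge_zero)
qed

lemma lf_integrable: "set_integrable lborel {0..pi/2} lf"
  unfolding set_integrable_def
proof (rule Bochner_Integration.integrable_bound[OF _ _ AE_I2])
  have "(\<lambda>t. t powr (-1/2::real)) integrable_on {0..pi/2}"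
    by (rule integrable_on_powr_from_0) auto
  hence "(\<lambda>t. t powr (-1/2::real)) absolutely_integrable_on {0..pi/2}"
    by (subst absolutely_integrable_on_iff_nonneg) auto
  hence A: "integrable lborel (\<lambda>x. indicat_real {0..pi/2} x *\<^sub>R (x powr (-1/2::real)))"
    unfolding set_integrable_def by (subst (asm) integrable_completion) measurable
  have B: "integrable lborel (\<lambda>x. indicat_real {0..pi/2} x *\<^sub>R (1::real))"
    using borel_integrable_atLeastAtMost'[of 0 "pi/2" "\<lambda>_. 1::real"]
    unfolding set_integrable_def by simp
  show "integrable lborel (\<lambda>x. indicat_real {0..pi/2} x *\<^sub>R (1 + 2 * x powr (-1/2::real)))"
    using Bochner_Integration.integrable_add[OF B integrable_mult_right[OF A, of 2]]
    by (simp add: algebra_simps)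
  show "(\<lambda>x. indicat_real {0..pi/2} x *\<^sub>R lf x) \<in> borel_measurable lborel"
    unfolding lf_def by measurable
  fix x :: real
  show "norm (indicat_real {0..pi/2} x *\<^sub>R lf x) \<le> norm (indicat_real {0..pi/2} x *\<^sub>R (1 + 2 * x powr (-1/2::real)))"
  proof (cases "x \<in> {0<..pi/2}")
    case True then show ?thesis using lf_bound[of x]
      by (simp add: indicator_def)
  next
    case False
    then show ?thesis by (auto simp: indicator_def lf_def)
  qed
qed




lemma lam_def': "lobachevsky z = - (LBINT t=0..z. lf t)"
  unfolding lobachevsky_def lf_def by simp

lemma lf_ii:
  assumes "0 \<le> a" "a \<le> pi/2" "0 \<le> b" "b \<le> pi/2"
  shows "interval_lebesgue_integrable lborel (ereal a) (ereal b) lf"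
  unfolding interval_lebesgue_integrable_def
  using assms
  by (auto intro!: set_integrable_subset[OF lf_integrable] simp: einterval_iff)

lemma lam_split:
  assumes "0 \<le> c" "c \<le> pi/2" "0 \<le> z" "z \<le> pi/2"
  shows "lobachevsky z = lobachevsky c - (LBINT t=c..z. lf t)"
proof -
  have m1: "min (ereal 0) (min (ereal c) (ereal z)) = ereal 0" using assms by (simp add: min_def)
  have m2: "max (ereal 0) (max (ereal c) (ereal z)) = ereal (max c z)" using assms by (simp add: max_def)
  have "interval_lebesgue_integrable lborel (min (ereal 0) (min (ereal c) (ereal z))) (max (ereal 0) (max (ereal c) (ereal z))) lf"
    unfolding m1 m2 using assms by (intro lf_ii) (auto simp: max_def)
  from interval_integral_sum[OF this] show ?thesis
    unfolding lam_def' by (simp add: zero_ereal_def)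
qed

lemma lam_odd: "lobachevsky (- w) = - lobachevsky w"
proof -
  have "(LBINT t=0..(-w). lf t) = (LBINT t=ereal w..0. lf (- t))"
    by (subst interval_integral_reflect) (simp add: zero_ereal_def)
  also have "\<dots> = (LBINT t=ereal w..0. lf t)"
    unfolding lf_def by (simp add: abs_mult)
  also have "\<dots> = - (LBINT t=0..w. lf t)"
    by (rule interval_integral_endpoints_reverse)
  finally show ?thesis unfolding lam_def' by simp
qed

lemma lf_cont: "0 < a \<Longrightarrow> b < pi \<Longrightarrow> continuous_on {a..b} lf"
proof -
  assume as: "0 < a" "b < pi"
  have nz: "\<And>x. x \<in> {a..b} \<Longrightarrow> \<bar>2 * sin x\<bar> \<noteq> 0"
  proof -
    fix x assume "x \<in> {a..b}"
    then have "0 < sin x" using as by (intro sin_gt_zero) auto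
    then show "\<bar>2 * sin x\<bar> \<noteq> 0" by simp
  qed
  show ?thesis unfolding lf_def
    by (intro continuous_on_ln continuous_intros) (use nz in blast)
qed

lemma lam_deriv:
  assumes "0 < z" "z < pi/2"
  shows "(lobachevsky has_real_derivative (- lf z)) (at z)"
proof -
  define a where "a = z/2"
  define b where "b = (z + pi/2)/2"
  have ab: "0 < a" "a < z" "z < b" "b < pi/2" using assms by (auto simp: a_def b_def)
  have "((\<lambda>u. LBINT y=z..u. lf y) has_vector_derivative (lf z)) (at z within {a..b})"
    using ab by (intro interval_integral_FTC2 lf_cont) auto
  then have "((\<lambda>u. LBINT y=z..u. lf y) has_vector_derivative (lf z)) (at z within {a<..<b})"
    by (rule has_vector_derivative_within_subset) auto
  then have "((\<lambda>u. LBINT y=z..u. lf y) has_vector_derivative (lf z)) (at z)"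
    using ab by (subst (asm) has_vector_derivative_within_open) auto
  then have "((\<lambda>u. lobachevsky z - (LBINT y=z..u. lf y)) has_real_derivative (- lf z)) (at z)"
    by (auto intro!: derivative_eq_intros simp: has_real_derivative_iff_has_vector_derivative[symmetric])
  then show ?thesis
  proof (rule has_field_derivative_transform_within_open[where S="{a<..<b}"])
    show "z \<in> {a<..<b}" "open {a<..<b}" using ab by auto
    fix u assume "u \<in> {a<..<b}"
    then show "lobachevsky z - (LBINT y=z..u. lf y) = lobachevsky u"
      using ab by (subst lam_split[of z u]) auto
  qed
qed

lemma ii_mono:
  fixes f g :: "real \<Rightarrow> real"
  assumes "a \<le> b" "interval_lebesgue_integrable lborel (ereal a) (ereal b) f"
    "interval_lebesgue_integrable lborel (ereal a) (ereal b) g"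
    "\<And>x. a < x \<Longrightarrow> x < b \<Longrightarrow> f x \<le> g x"
  shows "(LBINT x=a..b. f x) \<le> (LBINT x=a..b. g x)"
  using assms
  by (auto simp: interval_lebesgue_integral_le_eq interval_lebesgue_integrable_def einterval_iff
      intro!: set_integral_mono)




lemma ii_cont: "continuous_on UNIV (g::real\<Rightarrow>real) \<Longrightarrow> interval_lebesgue_integrable lborel (ereal a) (ereal b) g"
  by (intro interval_integrable_isCont) (simp add: continuous_on_eq_continuous_at)

lemma lam_small:
  assumes "0 \<le> u" "u \<le> pi/6"
  shows "0 \<le> lobachevsky u"
proof -
  have "(LBINT t=ereal 0..ereal u. lf t) \<le> (LBINT t=ereal 0..ereal u. (\<lambda>_. 0::real) t)"
  proof (rule ii_mono)
    show "interval_lebesgue_integrable lborel (ereal 0) (ereal u) lf" using assms by (intro lf_ii) auto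
    show "interval_lebesgue_integrable lborel (ereal 0) (ereal u) (\<lambda>_. 0::real)" by (intro ii_cont) auto
    fix x assume x: "0 < x" "x < u"
    then have "0 < sin x" using assms pi_gt3 by (intro sin_gt_zero) auto
    moreover have "sin x \<le> sin (pi/6)" using x assms by (intro sin_monotone_2pi_le) auto
    ultimately show "lf x \<le> 0" unfolding lf_def by (simp add: sin_30)
  qed (use assms in auto)
  then show ?thesis unfolding lam_def' by (simp add: zero_ereal_def)
qed

lemma lam_anti:
  assumes "pi/6 \<le> u" "u \<le> v" "v \<le> pi/2"
  shows "lobachevsky v \<le> lobachevsky u"
proof -
  have "(LBINT t=ereal u..ereal v. (\<lambda>_. 0::real) t) \<le> (LBINT t=ereal u..ereal v. lf t)"
  proof (rule ii_mono)
    show "interval_lebesgue_integrable lborel (ereal u) (ereal v) lf" using assms pi_gt_zero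
      by (intro lf_ii) linarith+
    show "interval_lebesgue_integrable lborel (ereal u) (ereal v) (\<lambda>_. 0::real)" by (intro ii_cont) auto
    fix x assume x: "u < x" "x < v"
    have "sin (pi/6) \<le> sin x" using x assms by (intro sin_monotone_2pi_le) auto
    then show "0 \<le> lf x" unfolding lf_def by (simp add: sin_30)
  qed (use assms in auto)
  moreover have "lobachevsky v = lobachevsky u - (LBINT t=u..v. lf t)"
    using assms pi_gt_zero by (intro lam_split) linarith+
  ultimately show ?thesis by simp
qed

lemma lam_pi6: "(1 + ln 2) * (pi/6) - 2 * (pi/6)^2 \<le> lobachevsky (pi/6)"
proof -
  have "(LBINT t=ereal 0..ereal (pi/6). lf t) \<le> (LBINT t=ereal 0..ereal (pi/6). (\<lambda>t. 4*t - 1 - ln 2) t)"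
  proof (rule ii_mono)
    show "interval_lebesgue_integrable lborel (ereal 0) (ereal (pi/6)) lf" by (intro lf_ii) auto
    show "interval_lebesgue_integrable lborel (ereal 0) (ereal (pi/6)) (\<lambda>t. 4*t - 1 - ln 2)"
      by (intro ii_cont continuous_intros)
    fix x assume x: "0 < x" "x < pi/6"
    then have "0 < sin x" using pi_gt3 by (intro sin_gt_zero) auto
    have "ln (4 * sin x) = ln 2 + ln (2 * sin x)" using ln_mult[of 2 "2 * sin x"] \<open>0 < sin x\<close> by simp
    then have "lf x = ln (4 * sin x) - ln 2" unfolding lf_def using \<open>0 < sin x\<close> by simp
    also have "\<dots> \<le> (4 * sin x - 1) - ln 2" using \<open>0 < sin x\<close> by (simp add: ln_le_minus_one)
    also have "\<dots> \<le> 4 * x - 1 - ln 2" using sin_x_le_x[of x] x by simp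
    finally show "lf x \<le> 4 * x - 1 - ln 2" .
  qed auto
  also have "(LBINT t=ereal 0..ereal (pi/6). (\<lambda>t. 4*t - 1 - ln 2) t) = (\<lambda>t. 2*t^2 - (1 + ln 2) * t) (pi/6) - (\<lambda>t. 2*t^2 - (1 + ln 2) * t) 0"
    by (intro interval_integral_FTC_finite continuous_intros)
       (auto simp: has_real_derivative_iff_has_vector_derivative[symmetric] intro!: derivative_eq_intros)
  finally show ?thesis unfolding lam_def' by (simp add: zero_ereal_def algebra_simps)
qed

lemma lam_upper:
  assumes "pi/6 \<le> v" "v \<le> pi/2"
  shows "lobachevsky (pi/6) - (sqrt 3 - 2 * cos v - v + pi/6) \<le> lobachevsky v"
proof -
  have "(LBINT t=ereal (pi/6)..ereal v. lf t) \<le> (LBINT t=ereal (pi/6)..ereal v. (\<lambda>t. 2 * sin t - 1) t)"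
  proof (rule ii_mono)
    show "interval_lebesgue_integrable lborel (ereal (pi/6)) (ereal v) lf" using assms by (intro lf_ii) auto
    show "interval_lebesgue_integrable lborel (ereal (pi/6)) (ereal v) (\<lambda>t. 2 * sin t - 1)"
      by (intro ii_cont continuous_intros)
    fix x assume x: "pi/6 < x" "x < v"
    then have "0 < sin x" using assms pi_gt3 by (intro sin_gt_zero) auto
    then show "lf x \<le> 2 * sin x - 1" unfolding lf_def using ln_le_minus_one[of "2 * sin x"] by simp
  qed (use assms in auto)
  also have "(LBINT t=ereal (pi/6)..ereal v. (\<lambda>t. 2 * sin t - 1) t) = (\<lambda>t. - 2 * cos t - t) v - (\<lambda>t. - 2 * cos t - t) (pi/6)"
    by (intro interval_integral_FTC_finite continuous_intros)
       (auto simp: has_real_derivative_iff_has_vector_derivative[symmetric] intro!: derivative_eq_intros)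
  finally have "(LBINT t=pi/6..v. lf t) \<le> sqrt 3 - 2 * cos v - v + pi/6"
    by (simp add: cos_30)
  moreover have "lobachevsky v = lobachevsky (pi/6) - (LBINT t=pi/6..v. lf t)"
    using assms by (intro lam_split) auto
  ultimately show ?thesis by simp
qed




definition th :: "real \<Rightarrow> real" where
  "th x = pi/2 - arccos (1 / (2 * cos (pi/x)))"

lemma geom:
  assumes "5 \<le> x"
  defines "a \<equiv> pi/x" and "c \<equiv> cos (pi/x)"
  shows "0 < a" "a \<le> pi/5" "sqrt 2 / 2 < c" "c \<le> 1" "sin (th x) = 1/(2*c)"
    "pi/6 \<le> th x" "th x < pi/4" "a < th x"
proof -
  show a0: "0 < a" using assms by (simp add: a_def)
  show a5: "a \<le> pi/5" using assms unfolding a_def by (intro divide_left_mono) auto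
  have "cos (pi/4) < cos a" using a0 a5 by (intro cos_monotone_0_pi) auto
  then show c2: "sqrt 2 / 2 < c" by (simp add: cos_45 c_def a_def)
  show c1: "c \<le> 1" by (simp add: c_def)
  have s2: "sqrt 2 * sqrt 2 = 2" by simp
  have "0 < sqrt 2 / 2" by simp
  then have cpos: "0 < c" using c2 by linarith
  define y where "y = 1/(2*c)"
  have y1: "1/2 \<le> y" using c1 cpos by (simp add: y_def field_simps)
  have "1 < sqrt 2 * c" using mult_strict_left_mono[OF c2, of "sqrt 2"] s2 by simp
  then have y2: "y < sqrt 2 / 2" unfolding y_def using cpos s2
    by (simp add: field_simps)
  have "sqrt 2 < sqrt (4::real)" by (rule real_sqrt_less_mono) simp
  then have "sqrt 2 / 2 < 1" by simp
  then have thy: "th x = arcsin y" unfolding th_def y_def c_def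
    using y1 y2 by (subst arcsin_arccos_eq) (auto simp: y_def c_def)
  show "sin (th x) = 1/(2*c)" unfolding thy using y1 y2 \<open>sqrt 2 / 2 < 1\<close> by (simp add: y_def)
  have "arcsin (sin (pi/6)) \<le> arcsin y" using y1 y2 \<open>sqrt 2 / 2 < 1\<close>
    by (intro arcsin_le_arcsin) (auto simp: sin_30)
  then show "pi/6 \<le> th x" unfolding thy by (subst (asm) arcsin_sin) auto
  have "arcsin y < arcsin (sin (pi/4))" using y1 y2 \<open>sqrt 2 / 2 < 1\<close>
    by (intro arcsin_less_arcsin) (auto simp: sin_45)
  then show th4: "th x < pi/4" unfolding thy by (subst (asm) arcsin_sin) auto
  have api: "a \<le> pi" using a5 pi_gt_zero by linarith
  have sa: "sin a = sqrt (1 - c^2)" unfolding c_def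
    using a0 api unfolding a_def by (intro sin_cos_sqrt sin_ge_zero) auto
  have "1 - c^2 < y^2"
  proof -
    have "(sqrt 2 / 2)^2 < c^2" using c2 \<open>0 < sqrt 2 / 2\<close> by (intro power_strict_mono) auto
    then have hc: "1/2 < c^2" by (simp add: power_divide)
    have "0 < (2*c^2 - 1)^2" using hc by simp
    then have "4*c^2*(1 - c^2) < 1" by (simp add: algebra_simps power2_eq_square)
    moreover have "y^2 = 1 / (4*c^2)" unfolding y_def by (simp add: power_divide power_mult_distrib)
    moreover have "1 - c^2 < 1 / (4*c^2)"
      using \<open>4*c^2*(1 - c^2) < 1\<close> cpos by (subst pos_less_divide_eq) (auto simp: algebra_simps)
    ultimately show ?thesis by simp
  qed
  then have "sqrt (1 - c^2) < sqrt (y^2)" by (rule real_sqrt_less_mono)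
  then have "sin a < y" unfolding sa using y1 by simp
  also have "y = sin (th x)" unfolding thy using y1 y2 \<open>sqrt 2 / 2 < 1\<close> by simp
  finally show "a < th x" using a0 a5 th4 \<open>pi/6 \<le> th x\<close>
    by (subst (asm) sin_mono_less_eq) auto
qed




lemma ident:
  assumes "5 \<le> x"
  shows "2 * lf (th x) + lf (th x + pi/x) + lf (th x - pi/x) = 2 * lf (pi/2 - 2 * th x)"
proof -
  define t where "t = th x"
  define a where "a = pi/x"
  define c where "c = cos (pi/x)"
  note g = geom[OF assms, folded t_def a_def c_def]
  have cpos: "0 < c" using g(3) real_sqrt_ge_zero[of 2] by linarith
  define y where "y = 1/(2*c)"
  have sy: "sin t = y" using g(5) by (simp add: y_def)
  have "(sqrt 2 / 2)^2 < c^2" using g(3) by (intro power_strict_mono) auto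
  then have hc: "1/2 < c^2" by (simp add: power_divide)
  have ca: "cos a = c" by (simp add: a_def c_def)
  have ypos: "0 < y" using cpos by (simp add: y_def)
  have y2: "y^2 = 1/(4*c^2)" unfolding y_def by (simp add: power_divide power_mult_distrib)
  have D: "1 - 2*y^2 > 0" unfolding y2 using hc by (simp add: divide_less_eq)
  have sP: "0 < sin (t + a)" using g by (intro sin_gt_zero) (auto, linarith?)
  have sQ: "0 < sin (t - a)" using g by (intro sin_gt_zero) auto
  have cost: "cos (2*t) = 1 - 2*y^2" using sy by (simp add: cos_double_sin)
  have sD: "sin (pi/2 - 2*t) = 1 - 2*y^2" using cost sin_cos_eq[of "pi/2 - 2*t"] by simp
  have e1: "cos t^2 = 1 - sin t^2" "cos a^2 = 1 - sin a^2" by (simp_all add: cos_squared_eq)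
  have "sin (t+a) * sin (t-a) = sin t^2 * cos a^2 - cos t^2 * sin a^2"
    by (simp add: sin_add sin_diff power2_eq_square algebra_simps)
  then have prod: "sin (t+a) * sin (t-a) = (sin t)^2 - (sin a)^2"
    by (simp add: e1 algebra_simps)
  have sa2: "(sin a)^2 = 1 - c^2" using ca by (simp add: sin_squared_eq)
  have key: "(2*y)^2 * ((2 * sin (t+a)) * (2 * sin (t-a))) = (2*(1 - 2*y^2))^2"
  proof -
    have PQ: "sin (t+a) * sin (t-a) = y^2 - (1 - c^2)" using prod sy sa2 by simp
    have "(2*y)^2 * ((2 * sin (t+a)) * (2 * sin (t-a))) = 16 * y^2 * (sin (t+a) * sin (t-a))"
      by (simp add: power2_eq_square)
    also have "\<dots> = 16 * y^2 * (y^2 - (1 - c^2))" by (simp only: PQ)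
    also have "\<dots> = (2*(1 - 2*y^2))^2" unfolding y2 using cpos
      by (simp add: field_simps power2_eq_square)
    finally show ?thesis .
  qed
  have "2 * lf t + lf (t+a) + lf (t-a) = ln ((2*y)^2 * ((2 * sin (t+a)) * (2 * sin (t-a))))"
    unfolding lf_def using sP sQ ypos sy ln_realpow[of 2 4]
    by (simp add: ln_mult ln_realpow abs_mult)
  also have "\<dots> = 2 * lf (pi/2 - 2*t)"
    unfolding key lf_def sD using D by (simp add: ln_realpow)
  finally show ?thesis by (simp add: t_def a_def)
qed




lemma num_aux:
  fixes p l r3 r2 :: real
  assumes "31415/10000 \<le> p" "p \<le> 31416/10000" "p*p \<le> 98697/10000" "r3 \<le> 17321/10000" "14142/10000 \<le> r2" "2/3*p \<le> l*p"
  shows "0 < 3*((1 + l)*(p/6) - 2*(p/6)^2) - 2*(r3 - r2 - p/12) - (r3 - p/3)"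
        "0 \<le> ((1 + l)*(p/6) - 2*(p/6)^2) - (r3 - r2 - p/12)"
proof -
  have e: "(1 + l)*(p/6) - 2*(p/6)^2 = p/6 + (l*p)/6 - (p*p)/18" by (simp add: algebra_simps power2_eq_square)
  have e1: "3*((1 + l)*(p/6) - 2*(p/6)^2) - 2*(r3 - r2 - p/12) - (r3 - p/3) = p + l*p/2 - p*p/6 - 3*r3 + 2*r2"
    unfolding e by (simp add: algebra_simps)
  have e2: "((1 + l)*(p/6) - 2*(p/6)^2) - (r3 - r2 - p/12) = p/4 + l*p/6 - p*p/18 - r3 + r2"
    unfolding e by (simp add: algebra_simps)
  show "0 < 3*((1 + l)*(p/6) - 2*(p/6)^2) - 2*(r3 - r2 - p/12) - (r3 - p/3)"
    unfolding e1 using assms by linarith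
  show "0 \<le> ((1 + l)*(p/6) - 2*(p/6)^2) - (r3 - r2 - p/12)"
    unfolding e2 using assms by linarith
qed

lemma numeric:
  "0 < 3*((1 + ln 2)*(pi/6) - 2*(pi/6)^2) - 2*(sqrt 3 - sqrt 2 - pi/12) - (sqrt 3 - pi/3)"
  "0 \<le> ((1 + ln 2)*(pi/6) - 2*(pi/6)^2) - (sqrt 3 - sqrt 2 - pi/12)"
proof -
  have p1: "31415/10000 \<le> pi" using pi_approx(1) by simp
  have p3: "pi \<le> 31416/10000" using pi_approx(2) by simp
  have p2: "pi*pi \<le> 98697/10000" using mult_mono[OF p3 p3] by simp
  have l: "2/3 \<le> ln (2::real)" by (rule ln2_ge_two_thirds)
  have s3: "sqrt 3 \<le> 17321/10000" by (rule real_le_lsqrt) (auto simp: power2_eq_square)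
  have s2: "14142/10000 \<le> sqrt 2" by (rule real_le_rsqrt) (simp add: power2_eq_square)
  have lp: "2/3 * pi \<le> ln 2 * pi" using l by (intro mult_right_mono) auto
  show "0 < 3*((1 + ln 2)*(pi/6) - 2*(pi/6)^2) - 2*(sqrt 3 - sqrt 2 - pi/12) - (sqrt 3 - pi/3)"
    by (rule num_aux(1)[OF p1 p3 p2 s3 s2 lp])
  show "0 \<le> ((1 + ln 2)*(pi/6) - 2*(pi/6)^2) - (sqrt 3 - sqrt 2 - pi/12)"
    by (rule num_aux(2)[OF p1 p3 p2 s3 s2 lp])
qed

definition G :: "real \<Rightarrow> real" where
  "G x = 2 * lobachevsky (th x) + lobachevsky (th x + pi/x) + lobachevsky (th x - pi/x)
        + lobachevsky (pi/2 - 2 * th x)"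

lemma Gpos:
  assumes "5 \<le> x" shows "0 < G x"
proof -
  define t where "t = th x"
  define a where "a = pi/x"
  note g = geom[OF assms, folded t_def a_def]
  define L where "L = lobachevsky (pi/6)"
  have L: "(1 + ln 2)*(pi/6) - 2*(pi/6)^2 \<le> L" unfolding L_def by (rule lam_pi6)
  have l4: "L - (sqrt 3 - sqrt 2 - pi/12) \<le> lobachevsky (pi/4)"
    using lam_upper[of "pi/4"] by (simp add: cos_45 L_def)
  have l2: "L - (sqrt 3 - pi/3) \<le> lobachevsky (pi/2)"
    using lam_upper[of "pi/2"] by (simp add: L_def)
  define K where "K = (1 + ln 2)*(pi/6) - 2*(pi/6)^2"
  note nm = numeric[folded K_def] L[folded K_def]
  have n1: "0 < 3*L - 2*(sqrt 3 - sqrt 2 - pi/12) - (sqrt 3 - pi/3)" using nm by linarith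
  have n2: "0 \<le> L - (sqrt 3 - sqrt 2 - pi/12)" using nm by linarith
  note n = n1 n2
  have A: "lobachevsky (pi/4) \<le> lobachevsky t" using g by (intro lam_anti) auto
  have B: "lobachevsky (pi/2) \<le> lobachevsky (t + a)" using g by (intro lam_anti) auto
  have C: "0 \<le> lobachevsky (t - a)"
  proof (cases "t - a \<le> pi/6")
    case True then show ?thesis using g by (intro lam_small) auto
  next
    case False
    then have "lobachevsky (pi/4) \<le> lobachevsky (t - a)" using g by (intro lam_anti) auto
    then show ?thesis using l4 n by linarith
  qed
  have D: "0 \<le> lobachevsky (pi/2 - 2 * t)" using g by (intro lam_small) auto
  show ?thesis unfolding G_def t_def[symmetric] a_def[symmetric]
    using A B C D l4 l2 n by (smt (verit))
qed




lemma th_deriv: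
  assumes "5 \<le> x" shows "\<exists>D. (th has_real_derivative D) (at x)"
proof -
  define c where "c = cos (pi/x)"
  have g3: "sqrt 2 / 2 < c" "c \<le> 1" using geom[OF assms] by (simp_all add: c_def)
  have cpos: "0 < c" using g3 real_sqrt_ge_zero[of 2] by linarith
  have "1 \<le> sqrt (2::real)" by (rule real_le_rsqrt) simp
  then have "1 < 2 * c" using g3 by linarith
  then have y1: "1 / (2*c) < 1" using cpos by simp
  have y0: "-1 < 1 / (2*c)" using cpos by (smt (verit) divide_pos_pos)
  have x0: "x \<noteq> 0" using assms by simp
  show ?thesis unfolding th_def[abs_def]
    using y1 y0 x0 cpos unfolding c_def by (intro exI) (auto intro!: derivative_eq_intros)
qed




definition Phi :: "real \<Rightarrow> real" where "Phi x = x/2 * G x"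

lemma Phi_deriv:
  assumes "5 \<le> x" shows "\<exists>y. (Phi has_real_derivative y) (at x) \<and> 0 < y"
proof -
  obtain D where dth: "(th has_real_derivative D) (at x)" using th_deriv[OF assms] by blast
  define t where "t = th x"
  define a where "a = pi/x"
  note g = geom[OF assms, folded t_def a_def]
  have x0: "x \<noteq> 0" using assms by simp
  have dA: "((\<lambda>x. pi/x) has_real_derivative (- pi / x^2)) (at x)"
    using x0 by (auto intro!: derivative_eq_intros simp: power2_eq_square field_simps)
  have l1: "(lobachevsky has_real_derivative - lf (th x)) (at (th x))"
    using g unfolding t_def by (intro lam_deriv) linarith+
  have l2: "(lobachevsky has_real_derivative - lf (th x + pi/x)) (at (th x + pi/x))"
    using g unfolding t_def a_def by (intro lam_deriv) linarith+
  have l3: "(lobachevsky has_real_derivative - lf (th x - pi/x)) (at (th x - pi/x))"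
    using g unfolding t_def a_def by (intro lam_deriv) linarith+
  have l4: "(lobachevsky has_real_derivative - lf (pi/2 - 2 * th x)) (at (pi/2 - 2 * th x))"
    using g unfolding t_def by (intro lam_deriv) linarith+
  have d1: "((\<lambda>x. lobachevsky (th x)) has_real_derivative (- lf t * D)) (at x)"
    using DERIV_chain2[OF l1 dth] by (simp add: t_def)
  have d2: "((\<lambda>x. lobachevsky (th x + pi/x)) has_real_derivative (- lf (t + a) * (D + - pi / x^2))) (at x)"
    using DERIV_chain2[OF l2 DERIV_add[OF dth dA]] by (simp add: t_def a_def)
  have d3: "((\<lambda>x. lobachevsky (th x - pi/x)) has_real_derivative (- lf (t - a) * (D - - pi / x^2))) (at x)"
    using DERIV_chain2[OF l3 DERIV_diff[OF dth dA]] by (simp add: t_def a_def)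
  have d4': "((\<lambda>x. pi/2 - 2 * th x) has_real_derivative (0 - 2 * D)) (at x)"
    by (intro DERIV_diff DERIV_const DERIV_cmult dth)
  have d4: "((\<lambda>x. lobachevsky (pi/2 - 2 * th x)) has_real_derivative (- lf (pi/2 - 2*t) * (0 - 2 * D))) (at x)"
    using DERIV_chain2[OF l4 d4'] by (simp add: t_def)
  define DG where "DG = 2 * (- lf t * D) + (- lf (t + a) * (D + - pi / x^2)) + (- lf (t - a) * (D - - pi / x^2))
     + (- lf (pi/2 - 2*t) * (0 - 2 * D))"
  have dG: "(G has_real_derivative DG) (at x)"
    unfolding G_def[abs_def] DG_def
    by (intro DERIV_add DERIV_cmult d1 d2 d3 d4)
  have dP: "(Phi has_real_derivative (1/2 * G x + DG * (x/2))) (at x)"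
  proof -
    have "((\<lambda>x. x/2 * G x) has_real_derivative (1/2 * G x + DG * (x/2))) (at x)"
    proof (rule DERIV_mult[OF _ dG])
      show "((\<lambda>x. x/2) has_real_derivative 1/2) (at x)" by (auto intro!: derivative_eq_intros)
    qed
    then show ?thesis unfolding Phi_def[abs_def] .
  qed
  have E: "2 * lf t + lf (t + a) + lf (t - a) = 2 * lf (pi/2 - 2 * t)"
    using ident[OF assms] by (simp add: t_def a_def)
  have DGe: "DG = pi / x^2 * (lf (t + a) - lf (t - a))"
  proof -
    have "DG = - D * (2 * lf t + lf (t + a) + lf (t - a) - 2 * lf (pi/2 - 2 * t)) + pi / x^2 * (lf (t + a) - lf (t - a))"
      unfolding DG_def by (simp add: algebra_simps)
    then show ?thesis using E by simp
  qed
  have s1: "0 < sin (t - a)" using g by (intro sin_gt_zero) auto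
  have "sin (t - a) \<le> sin (t + a)" using g by (intro sin_monotone_2pi_le) auto
  then have "lf (t - a) \<le> lf (t + a)" unfolding lf_def using s1 by simp
  then have "0 \<le> DG" unfolding DGe by simp
  moreover have "0 < G x" by (rule Gpos[OF assms])
  moreover have "0 \<le> DG * (x/2)" using \<open>0 \<le> DG\<close> assms by simp
  ultimately have "0 < 1/2 * G x + DG * (x/2)" by linarith
  then show ?thesis using dP by blast
qed

theorem mainTheorem3:
  shows "strict_mono_on {n::nat. 5 \<le> n} lobell_vol"
proof (rule strict_mono_onI)
  have vol: "lobell_vol n = Phi (real n)" if "5 \<le> n" for n
  proof -
    have "lobachevsky (2 * th (real n) - pi/2) = - lobachevsky (pi/2 - 2 * th (real n))"
      using lam_odd[of "pi/2 - 2 * th (real n)"] by simp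
    then show ?thesis
      unfolding lobell_vol_def lobell_theta_def Let_def Phi_def G_def th_def by simp
  qed
  fix m n :: nat assume mn: "m \<in> {n. 5 \<le> n}" "n \<in> {n. 5 \<le> n}" "m < n"
  have "Phi (real m) < Phi (real n)"
  proof (rule DERIV_pos_imp_increasing[of "real m" "real n" Phi])
    show "real m < real n" using mn by simp
    fix x assume "real m \<le> x" "x \<le> real n"
    then have "5 \<le> x" using mn by simp
    then show "\<exists>y. DERIV Phi x :> y \<and> 0 < y" by (rule Phi_deriv)
  qed
  then show "lobell_vol m < lobell_vol n" using vol mn by simp
qed


end
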